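(* Let $\nu$ be a positive Borel measure on $]0,\infty[$ satisfying $$\int_{]0,\infty[} \frac{\nu(\mathrm{d} r)}{1+r} < \infty .$$ For $\omega > 0$ define $$\mathcal{A}_1(\omega) := \omega^2 \int_{]0,\infty[} \frac{\nu(\mathrm{d} r)}{\omega^2 + r^2}, \qquad \mathcal{D}_1(\omega) := \omega \int_{]0,\infty[} \frac{r\,\nu(\mathrm{d} r)}{\omega^2 + r^2}.$$ Then, as $\omega \to \infty$: (1) $\mathcal{A}_1(\omega)/\omega \to 0$ and $\mathcal{D}_1(\omega)/\omega \to 0$; (2) if moreover $M := \int_{]0,\infty[} \nu(\mathrm{d} r) < \infty$, then $\mathcal{A}_1(\omega) \to M$.
   Context: The functions $\mathcal{A}_1(\omega) = \mathrm{Re}\, b(-\mathrm{i}\omega)$ and $\mathcal{D}_1(\omega) = -\mathrm{Im}\, b(-\mathrm{i}\omega)$ are the attenuation and dispersion functions associated with an admissible dispersion-attenuation function $b(p) = p\int_{]0,\infty[} \frac{\nu(\mathrm{d} r)}{p+r}$, where $\nu$ (the dispersion-attenuation spectral measure) is a positive measure satisfying the integrability condition above. *)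

theory Defs
  imports "HOL-Analysis.Analysis"
begin

definition admissible_spectral_measure :: "real measure \<Rightarrow> bool" where
  "admissible_spectral_measure \<nu> \<longleftrightarrow>
     sets \<nu> = sets borel \<and> emeasure \<nu> {..0} = 0 \<and>
     (\<integral>\<^sup>+ r \<in> {0<..}. ennreal (1 / (1 + r)) \<partial>\<nu>) < \<infinity>"

definition A1 :: "real measure \<Rightarrow> real \<Rightarrow> real" where
  "A1 \<nu> \<omega> = \<omega>\<^sup>2 * (\<integral> r \<in> {0<..}. 1 / (\<omega>\<^sup>2 + r\<^sup>2) \<partial>\<nu>)"

definition D1 :: "real measure \<Rightarrow> real \<Rightarrow> real" where
  "D1 \<nu> \<omega> = \<omega> * (\<integral> r \<in> {0<..}. r / (\<omega>\<^sup>2 + r\<^sup>2) \<partial>\<nu>)"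

end

theory Submission
  imports Defs "HOL-Real_Asymp.Real_Asymp"
begin

lemma dc:
  fixes \<nu> :: "real measure" and g :: "real \<Rightarrow> real \<Rightarrow> real"
  assumes sets: "sets \<nu> = sets borel" and wi: "integrable \<nu> w" and w0: "\<And>r. 0 \<le> w r"
    and gm: "\<And>\<omega>. g \<omega> \<in> borel_measurable borel" and hm: "h \<in> borel_measurable borel"
    and lim: "\<And>r. r > 0 \<Longrightarrow> ((\<lambda>\<omega>. g \<omega> r) \<longlongrightarrow> h r) at_top"
    and bd: "\<And>\<omega> r. \<omega> \<ge> 1 \<Longrightarrow> r > 0 \<Longrightarrow> \<bar>g \<omega> r\<bar> \<le> w r"
  shows "((\<lambda>\<omega>. set_lebesgue_integral \<nu> {0<..} (g \<omega>)) \<longlongrightarrow> set_lebesgue_integral \<nu> {0<..} h) at_top"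
  unfolding set_lebesgue_integral_def
proof (rule integral_dominated_convergence_at_top[where w = w])
  show "(\<lambda>x. indicator {0<..} x *\<^sub>R h x) \<in> borel_measurable \<nu>"
    using hm by (simp add: measurable_cong_sets[OF sets refl])
  show "\<And>t. (\<lambda>x. indicator {0<..} x *\<^sub>R g t x) \<in> borel_measurable \<nu>"
    using gm by (simp add: measurable_cong_sets[OF sets refl])
  show "integrable \<nu> w" by fact
  show "AE x in \<nu>. ((\<lambda>i. indicator {0<..} x *\<^sub>R g i x) \<longlongrightarrow> indicator {0<..} x *\<^sub>R h x) at_top"
  proof (rule AE_I2)
    fix x :: real
    show "((\<lambda>i. indicator {0<..} x *\<^sub>R g i x) \<longlongrightarrow> indicator {0<..} x *\<^sub>R h x) at_top"
      by (cases "x > 0") (auto intro: lim)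
  qed
  show "\<forall>\<^sub>F i in at_top. AE x in \<nu>. norm (indicator {0<..} x *\<^sub>R g i x) \<le> w x"
    unfolding eventually_at_top_linorder
  proof (intro exI[of _ 1] allI impI AE_I2)
    fix i x :: real assume "1 \<le> i"
    then show "norm (indicator {0<..} x *\<^sub>R g i x) \<le> w x"
      using bd[of i x] w0[of x] by (cases "x > 0") auto
  qed
qed

lemma wint:
  fixes \<nu> :: "real measure"
  assumes "admissible_spectral_measure \<nu>"
  shows "integrable \<nu> (\<lambda>r. indicator {0<..} r * (1 / (1 + r)))"
proof -
  have sets: "sets \<nu> = sets borel" using assms by (simp add: admissible_spectral_measure_def)
  have fin: "(\<integral>\<^sup>+ r \<in> {0<..}. ennreal (1 / (1 + r)) \<partial>\<nu>) < \<infinity>"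
    using assms by (simp add: admissible_spectral_measure_def)
  have eq: "(\<integral>\<^sup>+ r. ennreal (norm (indicator {0<..} r * (1 / (1 + r)))) \<partial>\<nu>)
      = (\<integral>\<^sup>+ r \<in> {0<..}. ennreal (1 / (1 + r)) \<partial>\<nu>)"
    by (rule nn_integral_cong) (auto split: split_indicator)
  show ?thesis
    unfolding integrable_iff_bounded
    using fin eq by (simp add: measurable_cong_sets[OF sets refl])
qed

lemma bd1: "(\<omega>::real) \<ge> 1 \<Longrightarrow> r > 0 \<Longrightarrow> \<bar>\<omega> / (\<omega>\<^sup>2 + r\<^sup>2)\<bar> \<le> 2 * (1 * (1 / (1 + r)))"
proof -
  assume a: "\<omega> \<ge> 1" "r > 0"
  have p: "\<omega>\<^sup>2 + r\<^sup>2 > 0" using a by (simp add: add_pos_nonneg)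
  have "\<omega> * (1 + r) \<le> 2 * (\<omega>\<^sup>2 + r\<^sup>2)"
  proof -
    have h1: "\<omega> * 1 \<le> \<omega> * \<omega>" using a by (intro mult_left_mono) auto
    have h2: "0 \<le> (\<omega> - r) * (\<omega> - r)" by simp
    have h3: "(\<omega> - r) * (\<omega> - r) = \<omega>*\<omega> - 2*(\<omega>*r) + r*r" by (simp add: algebra_simps)
    have h4: "\<omega> * (1 + r) = \<omega> + \<omega>*r" by (simp add: algebra_simps)
    have h5: "0 \<le> r*r" by simp
    have h6: "0 \<le> \<omega>*\<omega> - 2*(\<omega>*r) + r*r" using h2 h3 by simp
    have h7: "\<omega> \<le> \<omega>*\<omega>" using h1 by simp
    show ?thesis unfolding power2_eq_square h4 using h7 h6 h5 mult_nonneg_nonneg[of \<omega> \<omega>] a by (smt (verit))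
  qed
  then show ?thesis using a p by (simp add: field_simps)
qed

lemma bd2: "(\<omega>::real) \<ge> 1 \<Longrightarrow> r > 0 \<Longrightarrow> \<bar>r / (\<omega>\<^sup>2 + r\<^sup>2)\<bar> \<le> 2 * (1 * (1 / (1 + r)))"
proof -
  assume a: "\<omega> \<ge> 1" "r > 0"
  have p: "\<omega>\<^sup>2 + r\<^sup>2 > 0" using a by (simp add: add_pos_nonneg)
  have "r * (1 + r) \<le> 2 * (\<omega>\<^sup>2 + r\<^sup>2)"
  proof -
    have h1: "1 \<le> \<omega> * \<omega>" using a mult_mono[of 1 \<omega> 1 \<omega>] by simp
    have h2: "0 \<le> (1 - r) * (1 - r)" by simp
    have h3: "(1 - r) * (1 - r) = 1 - 2*r + r*r" by (simp add: algebra_simps)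
    have h4: "r * (1 + r) = r + r*r" by (simp add: algebra_simps)
    have h6: "0 \<le> 1 - 2*r + r*r" using h2 h3 by simp
    have h5: "0 \<le> r*r" by simp
    show ?thesis unfolding power2_eq_square h4 using h1 h6 h5 by (smt (verit))
  qed
  then show ?thesis using a p by (simp add: field_simps)
qed

lemma bd3: "(\<omega>::real) \<ge> 1 \<Longrightarrow> r > 0 \<Longrightarrow> \<bar>\<omega>\<^sup>2 / (\<omega>\<^sup>2 + r\<^sup>2)\<bar> \<le> 1"
proof -
  assume a: "\<omega> \<ge> 1" "r > 0"
  have p: "\<omega>\<^sup>2 + r\<^sup>2 > 0" using a by (simp add: add_pos_nonneg)
  then show ?thesis using a by (simp add: field_simps)
qed

theorem theorem2:
  fixes \<nu> :: "real measure"
  assumes "admissible_spectral_measure \<nu>"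
  shows "((\<lambda>\<omega>. A1 \<nu> \<omega> / \<omega>) \<longlongrightarrow> 0) at_top
         \<and> ((\<lambda>\<omega>. D1 \<nu> \<omega> / \<omega>) \<longlongrightarrow> 0) at_top
         \<and> (emeasure \<nu> {0<..} < \<infinity> \<longrightarrow>
               ((\<lambda>\<omega>. A1 \<nu> \<omega>) \<longlongrightarrow> measure \<nu> {0<..}) at_top)"
proof (intro conjI impI)
  have sets: "sets \<nu> = sets borel" using assms by (simp add: admissible_spectral_measure_def)
  define w where "w r = 2 * (indicator {0<..} r * (1 / (1 + r)))" for r :: real
  have wi: "integrable \<nu> w" unfolding w_def by (rule integrable_mult_right[OF wint[OF assms]])
  have w0: "\<And>r. 0 \<le> w r" unfolding w_def by (auto split: split_indicator)
  have wr: "\<And>r. r > 0 \<Longrightarrow> w r = 2 * (1 * (1 / (1 + r)))" unfolding w_def by simp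
  have L1: "((\<lambda>\<omega>. set_lebesgue_integral \<nu> {0<..} (\<lambda>r. \<omega> / (\<omega>\<^sup>2 + r\<^sup>2))) \<longlongrightarrow>
      set_lebesgue_integral \<nu> {0<..} (\<lambda>r. 0)) at_top"
  proof (rule dc[OF sets wi w0])
    fix r :: real assume "r > 0"
    show "((\<lambda>\<omega>. \<omega> / (\<omega>\<^sup>2 + r\<^sup>2)) \<longlongrightarrow> 0) at_top" by real_asymp
  next
    fix \<omega> r :: real assume "1 \<le> \<omega>" "0 < r"
    then show "\<bar>\<omega> / (\<omega>\<^sup>2 + r\<^sup>2)\<bar> \<le> w r" using bd1 wr by simp
  qed auto
  have E1: "\<forall>\<^sub>F \<omega> in at_top. set_lebesgue_integral \<nu> {0<..} (\<lambda>r. \<omega> / (\<omega>\<^sup>2 + r\<^sup>2)) = A1 \<nu> \<omega> / \<omega>"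
    using eventually_gt_at_top[of "0::real"]
  proof eventually_elim
    case (elim \<omega>)
    have "set_lebesgue_integral \<nu> {0<..} (\<lambda>r. \<omega> / (\<omega>\<^sup>2 + r\<^sup>2))
        = set_lebesgue_integral \<nu> {0<..} (\<lambda>r. \<omega> * (1 / (\<omega>\<^sup>2 + r\<^sup>2)))" by simp
    also have "\<dots> = \<omega> * set_lebesgue_integral \<nu> {0<..} (\<lambda>r. 1 / (\<omega>\<^sup>2 + r\<^sup>2))"
      by (rule set_integral_mult_right)
    finally show ?case using elim unfolding A1_def by (simp add: power2_eq_square)
  qed
  show "((\<lambda>\<omega>. A1 \<nu> \<omega> / \<omega>) \<longlongrightarrow> 0) at_top"
    using tendsto_cong[OF E1] L1 by (simp add: set_lebesgue_integral_def)
  have L2: "((\<lambda>\<omega>. set_lebesgue_integral \<nu> {0<..} (\<lambda>r. r / (\<omega>\<^sup>2 + r\<^sup>2))) \<longlongrightarrow>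
      set_lebesgue_integral \<nu> {0<..} (\<lambda>r. 0)) at_top"
  proof (rule dc[OF sets wi w0])
    fix r :: real assume "r > 0"
    show "((\<lambda>\<omega>. r / (\<omega>\<^sup>2 + r\<^sup>2)) \<longlongrightarrow> 0) at_top" by real_asymp
  next
    fix \<omega> r :: real assume "1 \<le> \<omega>" "0 < r"
    then show "\<bar>r / (\<omega>\<^sup>2 + r\<^sup>2)\<bar> \<le> w r" using bd2 wr by simp
  qed auto
  have E2: "\<forall>\<^sub>F \<omega> in at_top. set_lebesgue_integral \<nu> {0<..} (\<lambda>r. r / (\<omega>\<^sup>2 + r\<^sup>2)) = D1 \<nu> \<omega> / \<omega>"
    using eventually_gt_at_top[of "0::real"]
    by eventually_elim (simp add: D1_def)
  show "((\<lambda>\<omega>. D1 \<nu> \<omega> / \<omega>) \<longlongrightarrow> 0) at_top"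
    using tendsto_cong[OF E2] L2 by (simp add: set_lebesgue_integral_def)
  assume fin: "emeasure \<nu> {0<..} < \<infinity>"
  have S: "{0<..} \<in> sets \<nu>" using sets by simp
  have L3: "((\<lambda>\<omega>. set_lebesgue_integral \<nu> {0<..} (\<lambda>r. \<omega>\<^sup>2 / (\<omega>\<^sup>2 + r\<^sup>2))) \<longlongrightarrow>
      set_lebesgue_integral \<nu> {0<..} (\<lambda>r. 1)) at_top"
  proof (rule dc[OF sets integrable_real_indicator[OF S fin]])
    fix r :: real assume "r > 0"
    show "((\<lambda>\<omega>. \<omega>\<^sup>2 / (\<omega>\<^sup>2 + r\<^sup>2)) \<longlongrightarrow> 1) at_top" by real_asymp
  next
    fix \<omega> r :: real assume "1 \<le> \<omega>" "0 < r"
    then show "\<bar>\<omega>\<^sup>2 / (\<omega>\<^sup>2 + r\<^sup>2)\<bar> \<le> indicator {0<..} r" using bd3 by simp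
  qed auto
  have E3: "\<And>\<omega>. set_lebesgue_integral \<nu> {0<..} (\<lambda>r. \<omega>\<^sup>2 / (\<omega>\<^sup>2 + r\<^sup>2)) = A1 \<nu> \<omega>"
  proof -
    fix \<omega> :: real
    have "set_lebesgue_integral \<nu> {0<..} (\<lambda>r. \<omega>\<^sup>2 / (\<omega>\<^sup>2 + r\<^sup>2))
        = set_lebesgue_integral \<nu> {0<..} (\<lambda>r. \<omega>\<^sup>2 * (1 / (\<omega>\<^sup>2 + r\<^sup>2)))" by simp
    also have "\<dots> = \<omega>\<^sup>2 * set_lebesgue_integral \<nu> {0<..} (\<lambda>r. 1 / (\<omega>\<^sup>2 + r\<^sup>2))"
      by (rule set_integral_mult_right)
    finally show "set_lebesgue_integral \<nu> {0<..} (\<lambda>r. \<omega>\<^sup>2 / (\<omega>\<^sup>2 + r\<^sup>2)) = A1 \<nu> \<omega>"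
      unfolding A1_def .
  qed
  have C: "set_lebesgue_integral \<nu> {0<..} (\<lambda>r. 1::real) = measure \<nu> {0<..}"
    using set_integral_const[OF S, of "1::real"] fin by simp
  show "((\<lambda>\<omega>. A1 \<nu> \<omega>) \<longlongrightarrow> measure \<nu> {0<..}) at_top"
    using L3 unfolding E3 C .
qed

end
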